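(* Let $a_2,a_3$ be integers with $1<a_2<a_3$, $A=\{1,a_2,a_3\}$, and let $SG(A,n,p)$ be a stride generator. Then no thread (with respect to $n$) of order $i\le p$ is covered by any other thread.
   Context: For integers $n$ and $i\ge 0$, an integer $x$ has an $n$-generation of order $i$ if there are integers $c_1,c_2\ge 0$ with $x+ia_3=c_2a_2+c_1$ and $c_1+c_2\le n+i$. For integers $n$ and $p\ge0$, $SG(A,n,p)$ is a stride generator if: (A) every integer $0\le x<a_3$ has an $n$-generation of some order $\le p$; (B) at least one integer $0\le x<a_3$ has no $n$-generation of order $<p$; (C) at least one integer $0\le y<a_3$ has no $(n-1)$-generation of any order $\le p+1$. Threads: for integers $e\ge 0$, $i\ge0$ with $n+i-e\ge 0$, the thread $T(e,i)$ is the integer interval $[c,d]$ with $c=ea_2-ia_3$, $d=c+(n+i)-e$, of order $i$. Only such intervals meeting $[0,a_3)$ are regarded as threads. A thread $[c_1,d_1]$ covers a thread $[c_2,d_2]$ if $c_1\le c_2$ and $d_1\ge d_2$. *)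

theory Defs
  imports Main
begin

definition has_gen :: "int \<Rightarrow> int \<Rightarrow> int \<Rightarrow> nat \<Rightarrow> int \<Rightarrow> bool" where
  "has_gen a2 a3 n i x \<longleftrightarrow>
     (\<exists>c1 c2 :: int. c1 \<ge> 0 \<and> c2 \<ge> 0 \<and> x + int i * a3 = c2 * a2 + c1 \<and> c1 + c2 \<le> n + int i)"

definition stride_generator :: "int \<Rightarrow> int \<Rightarrow> int \<Rightarrow> nat \<Rightarrow> bool" where
  "stride_generator a2 a3 n p \<longleftrightarrow>
     (\<forall>x. 0 \<le> x \<and> x < a3 \<longrightarrow> (\<exists>i\<le>p. has_gen a2 a3 n i x)) \<and>
     (\<exists>x. 0 \<le> x \<and> x < a3 \<and> (\<forall>i<p. \<not> has_gen a2 a3 n i x)) \<and>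
     (\<exists>y. 0 \<le> y \<and> y < a3 \<and> (\<forall>i\<le>p+1. \<not> has_gen a2 a3 (n - 1) i y))"

definition thr_c :: "int \<Rightarrow> int \<Rightarrow> nat \<Rightarrow> nat \<Rightarrow> int" where
  "thr_c a2 a3 e i = int e * a2 - int i * a3"

definition thr_d :: "int \<Rightarrow> int \<Rightarrow> int \<Rightarrow> nat \<Rightarrow> nat \<Rightarrow> int" where
  "thr_d a2 a3 n e i = thr_c a2 a3 e i + (n + int i) - int e"

definition is_thread :: "int \<Rightarrow> int \<Rightarrow> int \<Rightarrow> nat \<Rightarrow> nat \<Rightarrow> bool" where
  "is_thread a2 a3 n e i \<longleftrightarrow>
     n + int i - int e \<ge> 0 \<and>
     (\<exists>x. thr_c a2 a3 e i \<le> x \<and> x \<le> thr_d a2 a3 n e i \<and> 0 \<le> x \<and> x < a3)"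

definition covers :: "int \<Rightarrow> int \<Rightarrow> int \<Rightarrow> nat \<Rightarrow> nat \<Rightarrow> nat \<Rightarrow> nat \<Rightarrow> bool" where
  "covers a2 a3 n e1 i1 e2 i2 \<longleftrightarrow>
     thr_c a2 a3 e1 i1 \<le> thr_c a2 a3 e2 i2 \<and> thr_d a2 a3 n e1 i1 \<ge> thr_d a2 a3 n e2 i2"

end

theory Submission
  imports Defs
begin

theorem lemma6:
  fixes a2 a3 n :: int and p :: nat
  assumes "1 < a2" and "a2 < a3"
    and "stride_generator a2 a3 n p"
    and "is_thread a2 a3 n e i" and "i \<le> p"
    and "is_thread a2 a3 n e' i'" and "(e', i') \<noteq> (e, i)"
  shows "\<not> covers a2 a3 n e' i' e i"
proof
  assume cov: "covers a2 a3 n e' i' e i"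
  define D where "D = int i' - int i"
  define E where "E = int e' - int e"
  have h1: "E*a2 \<le> D*a3" using cov unfolding covers_def thr_c_def D_def E_def
    by (simp add: algebra_simps)
  have h2: "E*(a2-1) \<ge> D*(a3-1)" using cov unfolding covers_def thr_d_def thr_c_def D_def E_def
    by (simp add: algebra_simps)
  have Dneg: "D < 0"
  proof (rule ccontr)
    assume "\<not> D < 0"
    show False
    proof (cases "D = 0")
      case True
      have "E*a2 \<le> 0" using h1 True by simp
      hence "E \<le> 0" using assms(1) by (smt (verit) mult_pos_pos)
      moreover have "E*(a2-1) \<ge> 0" using h2 True by simp
      hence "E \<ge> 0" using assms(1) by (simp add: zero_le_mult_iff)
      ultimately have "E = 0" by simp
      with True show False using assms(7) unfolding D_def E_def by simp
    next
      case False
      hence Dp: "D > 0" using \<open>\<not> D < 0\<close> by simp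
      have "E \<le> D" using h1 h2 by (simp add: algebra_simps)
      hence "E*(a2-1) \<le> D*(a2-1)" using assms(1) by (simp add: mult_right_mono)
      moreover have "D*(a2-1) < D*(a3-1)" using Dp assms(2) by simp
      ultimately show False using h2 by simp
    qed
  qed
  define u where "u = -D"
  define v where "v = -E"
  define s where "s = v*a2 - u*a3"
  have u0: "u > 0" using Dneg u_def by simp
  have s0: "s \<ge> 0" using h1 unfolding s_def u_def v_def by (simp add: algebra_simps)
  have s1: "s \<le> v - u" using h2 unfolding s_def u_def v_def by (simp add: algebra_simps)
  have up: "u \<le> int p" using assms(5) unfolding u_def D_def by simp
  define k where "k = nat (int p - u)"
  have kp: "k < p" using u0 up unfolding k_def by simp
  have kk: "int k = int p - u" using up unfolding k_def by simp
  from assms(3) obtain x where x: "0 \<le> x" "x < a3" "\<forall>i<p. \<not> has_gen a2 a3 n i x"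
    and A: "\<forall>x. 0 \<le> x \<and> x < a3 \<longrightarrow> (\<exists>i\<le>p. has_gen a2 a3 n i x)"
    unfolding stride_generator_def by blast
  obtain j where j: "j \<le> p" "has_gen a2 a3 n j x" using A x by blast
  have "j = p" using j x(3) by (meson le_neq_implies_less)
  with j obtain c1 c2 where c: "c1 \<ge> 0" "c2 \<ge> 0" "x + int p * a3 = c2*a2 + c1" "c1 + c2 \<le> n + int p"
    unfolding has_gen_def by blast
  have ua: "u*a3 = v*a2 - s" using s_def by simp
  have "has_gen a2 a3 n k x"
  proof (cases "c2 \<ge> v")
    case True
    have "x + int k * a3 = (c2 - v)*a2 + (c1 + s)"
      using c(3) ua unfolding kk by (simp add: algebra_simps)
    thus ?thesis unfolding has_gen_def using True c s0 s1 kk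
      by (intro exI[of _ "c1+s"] exI[of _ "c2-v"]) simp
  next
    case False
    have m: "(v - c2)*a2 \<ge> v - c2" using False assms(1)
      by (smt (verit) mult_le_cancel_left1)
    have eq: "x + int k * a3 = c1 + s - (v-c2)*a2"
      using c(3) ua unfolding kk by (simp add: algebra_simps)
    have nn: "x + int k * a3 \<ge> 0" using x(1) assms(1,2) by simp
    have le: "x + int k * a3 \<le> n + int k" using eq m c s1 kk by linarith
    show ?thesis unfolding has_gen_def
      by (rule exI[of _ "x + int k * a3"], rule exI[of _ 0]) (use nn le in simp)
  qed
  thus False using x(3) kp by blast
qed

end
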